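(* Let $q=q(n)$, $C'=C'(n)\ge1$ and $r=r(n)$ be such that $s=C'nq$ is a positive integer with $s\le n$, $\ln n=o(nq)$ and $r=o\!\left(\frac{1}{C'nq}\right)$. Let $N_2(r)$ be the size of a maximum matching in $\mathbb H_{[s]}(r)$. Then there is $s_2(r)$ with $s_2(r)\sim C'nqr$ such that $$N'_2(r)\preceq_{1-o(1/n)}N_2(r),$$ where $N'_2(r)$ has binomial distribution $\mathrm{Bin}(C'nq,s_2(r))$.
   Context: Let $\mathcal X_1,\mathcal X_2$ be disjoint $n$-element sets. For an integer $1\le s\le n$ and $r\in[0,1]$, $\mathbb H_{[s]}(r)$ is the random bipartite graph with parts $\mathcal X_1,\mathcal X_2$ constructed as follows: independently for $i=1,2$ choose $\mathcal X'_i\subseteq\mathcal X_i$ uniformly at random among all $s$-element subsets, and then make each pair in $\mathcal X'_1\times\mathcal X'_2$ an edge independently with probability $r$. For integer-valued random variables $X,Y$, $X\preceq_{1-o(1/n)}Y$ means there exists a coupling of $X$ and $Y$ with $\Pr\{X\le Y\}\ge1-\varepsilon_n$ for some $\varepsilon_n=o(1/n)$. *)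

theory Defs
  imports "HOL-Probability.Probability" "HOL-Library.Landau_Symbols"
begin

text \<open>Both parts X1, X2 are represented by the index set {..<n}; an edge between
  i in X1 and j in X2 is the pair (i, j).\<close>

definition ksubsets :: "nat \<Rightarrow> nat \<Rightarrow> nat set set" where
  "ksubsets n s = {A. A \<subseteq> {..<n} \<and> card A = s}"

definition H_s :: "nat \<Rightarrow> nat \<Rightarrow> real \<Rightarrow> (nat \<times> nat) set pmf" where
  "H_s n s r =
     do { A \<leftarrow> pmf_of_set (ksubsets n s);
          B \<leftarrow> pmf_of_set (ksubsets n s);
          f \<leftarrow> Pi_pmf (A \<times> B) False (\<lambda>_. bernoulli_pmf r);
          return_pmf {e. f e} }"

definition is_matching :: "(nat \<times> nat) set \<Rightarrow> (nat \<times> nat) set \<Rightarrow> bool" where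
  "is_matching E M \<longleftrightarrow> M \<subseteq> E \<and> inj_on fst M \<and> inj_on snd M"

definition max_matching :: "(nat \<times> nat) set \<Rightarrow> nat" where
  "max_matching E = Max (card ` {M. is_matching E M})"

definition N2_dist :: "nat \<Rightarrow> nat \<Rightarrow> real \<Rightarrow> nat pmf" where
  "N2_dist n s r = map_pmf max_matching (H_s n s r)"

definition dominated_with :: "nat pmf \<Rightarrow> nat pmf \<Rightarrow> real \<Rightarrow> bool" where
  "dominated_with X Y eps \<longleftrightarrow>
     (\<exists>\<mu> :: (nat \<times> nat) pmf. map_pmf fst \<mu> = X \<and> map_pmf snd \<mu> = Y \<and>
        measure_pmf.prob \<mu> {(x, y). x \<le> y} \<ge> 1 - eps)"

end

theory Submission
  imports Defs "HOL-Real_Asymp.Real_Asymp"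
begin


definition firstk :: "nat \<Rightarrow> nat set \<Rightarrow> nat set" where
  "firstk k S = set (take k (sorted_list_of_set S))"

lemma firstk_sub: "finite S \<Longrightarrow> firstk k S \<subseteq> S"
  unfolding firstk_def using set_take_subset[of k "sorted_list_of_set S"] by simp

lemma card_firstk: "finite S \<Longrightarrow> card (firstk k S) = min k (card S)"
  unfolding firstk_def by (simp add: distinct_card)

definition Tset :: "nat set \<Rightarrow> nat \<Rightarrow> nat set \<Rightarrow> nat set" where
  "Tset B k U = (if k \<le> card (B - U) then firstk k (B - U) else firstk k B)"

lemma Tset_sub: "finite B \<Longrightarrow> Tset B k U \<subseteq> B"
  unfolding Tset_def using firstk_sub[of "B - U" k] firstk_sub[of B k] by auto

lemma Tset_card: "finite B \<Longrightarrow> k \<le> card B \<Longrightarrow> card (Tset B k U) = k"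
  unfolding Tset_def by (simp add: card_firstk)

lemma Tset_sub2: "finite B \<Longrightarrow> k \<le> card (B - U) \<Longrightarrow> Tset B k U \<subseteq> B - U"
  unfolding Tset_def using firstk_sub by simp

fun greedy :: "nat set \<Rightarrow> nat \<Rightarrow> nat set \<Rightarrow> nat list \<Rightarrow> (nat \<times> nat \<Rightarrow> bool) \<Rightarrow> nat \<times> (nat \<times> nat) set" where
  "greedy B k U [] f = (0, {})"
| "greedy B k U (a # as) f =
     (if {b \<in> Tset B k U. f (a, b)} = {} then greedy B k U as f
      else (let b = Min {b \<in> Tset B k U. f (a, b)}; R = greedy B k (insert b U) as f
            in (Suc (fst R), insert (a, b) (snd R))))"

lemma greedy_cong:
  assumes "finite B" "\<forall>x\<in>set as \<times> B. f x = g x"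
  shows "greedy B k U as f = greedy B k U as g"
  using assms(2)
proof (induction as arbitrary: U)
  case Nil then show ?case by simp
next
  case (Cons a as)
  have H: "{b \<in> Tset B k U. f (a, b)} = {b \<in> Tset B k U. g (a, b)}"
    using Cons.prems Tset_sub[OF assms(1)] by auto
  have "greedy B k V as f = greedy B k V as g" for V
    using Cons by auto
  then show ?case by (simp only: greedy.simps H)
qed

lemma greedy_matching:
  assumes "finite B" "U \<subseteq> B" "distinct as" "card U + fst (greedy B k U as f) \<le> m"
    "k + m \<le> card B"
  shows "snd (greedy B k U as f) \<subseteq> {e. f e} \<inter> (set as \<times> (B - U))
       \<and> inj_on fst (snd (greedy B k U as f)) \<and> inj_on snd (snd (greedy B k U as f))
       \<and> card (snd (greedy B k U as f)) = fst (greedy B k U as f)"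
  using assms(2-4)
proof (induction as arbitrary: U)
  case Nil then show ?case by simp
next
  case (Cons a as)
  define H where "H = {b \<in> Tset B k U. f (a, b)}"
  show ?case
  proof (cases "H = {}")
    case True
    then have eq: "greedy B k U (a # as) f = greedy B k U as f" by (simp add: H_def)
    have IH: "snd (greedy B k U as f) \<subseteq> {e. f e} \<inter> (set as \<times> (B - U))
       \<and> inj_on fst (snd (greedy B k U as f)) \<and> inj_on snd (snd (greedy B k U as f))
       \<and> card (snd (greedy B k U as f)) = fst (greedy B k U as f)"
      using Cons.IH[of U] Cons.prems unfolding eq by simp
    have "set as \<times> (B - U) \<subseteq> set (a # as) \<times> (B - U)" by auto
    then show ?thesis unfolding eq using IH by blast
  next
    case False
    define b where "b = Min H"
    define R where "R = greedy B k (insert b U) as f"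
    have eq: "greedy B k U (a # as) f = (Suc (fst R), insert (a, b) (snd R))"
      unfolding greedy.simps H_def[symmetric] using False by (simp add: Let_def b_def R_def)
    have finU: "finite U" using finite_subset[OF Cons.prems(1) assms(1)] .
    have cU: "card U < m" using Cons.prems(3) unfolding eq by simp
    have "card (B - U) = card B - card U" using Cons.prems(1) finU by (simp add: card_Diff_subset)
    then have "k \<le> card (B - U)" using cU assms(5) by linarith
    then have Tsub: "Tset B k U \<subseteq> B - U" using Tset_sub2 assms(1) by blast
    have "H \<subseteq> B" using Tset_sub[OF assms(1), of k U] unfolding H_def by auto
    then have finH: "finite H" using assms(1) by (rule finite_subset)
    have bH: "b \<in> H" using Min_in[OF finH False] unfolding b_def .
    then have bB: "b \<in> B - U" and fab: "f (a, b)" using Tsub unfolding H_def by auto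
    have IH: "snd R \<subseteq> {e. f e} \<inter> (set as \<times> (B - insert b U)) \<and> inj_on fst (snd R)
       \<and> inj_on snd (snd R) \<and> card (snd R) = fst R"
      unfolding R_def
    proof (rule Cons.IH)
      show "insert b U \<subseteq> B" using bB Cons.prems(1) by auto
      show "distinct as" using Cons.prems(2) by simp
      show "card (insert b U) + fst (greedy B k (insert b U) as f) \<le> m"
        using Cons.prems(3) bB finU unfolding eq R_def by simp
    qed
    have fR: "fst ` snd R \<subseteq> set as" using IH by auto
    have aR: "a \<notin> fst ` snd R" using fR Cons.prems(2) by auto
    have sR: "snd ` snd R \<subseteq> B - insert b U" using IH by auto
    have bR: "b \<notin> snd ` snd R" using sR by auto
    have finR: "finite (snd R)"
      by (rule finite_subset[of _ "set as \<times> B"]) (use IH assms(1) in auto)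
    have nin: "(a, b) \<notin> snd R" using aR by force
    have c1: "insert (a, b) (snd R) \<subseteq> {e. f e} \<inter> (set (a # as) \<times> (B - U))"
      using IH fab bB by auto
    have c2: "inj_on fst (insert (a, b) (snd R))"
      using IH aR by (simp add: inj_on_insert) blast
    have c3: "inj_on snd (insert (a, b) (snd R))"
      using IH bR by (simp add: inj_on_insert) blast
    have c4: "card (insert (a, b) (snd R)) = Suc (fst R)"
      using finR nin IH by simp
    show ?thesis unfolding eq using c1 c2 c3 c4 by simp
  qed
qed



lemma row_hit:
  assumes "finite B" "T \<subseteq> B" "0 \<le> r" "r \<le> 1"
  shows "map_pmf (\<lambda>g. \<exists>b\<in>T. g (a, b)) (Pi_pmf ({a} \<times> B) False (\<lambda>_. bernoulli_pmf r))
         = bernoulli_pmf (1 - (1 - r) ^ card T)"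
proof -
  let ?P = "Pi_pmf ({a} \<times> B) False (\<lambda>_. bernoulli_pmf r)"
  let ?h = "\<lambda>g. \<exists>b\<in>T. g (a, b)"
  have fin: "finite ({a} \<times> B)" using assms(1) by simp
  have set_eq: "?h -` {False} = Pi ({a} \<times> B) (\<lambda>x. if x \<in> {a} \<times> T then {False} else UNIV)"
    using assms(2) by (auto simp: Pi_def)
  have "measure_pmf.prob ?P (?h -` {False}) =
        (\<Prod>x\<in>{a} \<times> B. measure_pmf.prob (bernoulli_pmf r) (if x \<in> {a} \<times> T then {False} else UNIV))"
    unfolding set_eq by (rule measure_Pi_pmf_Pi[OF fin])
  also have "\<dots> = (\<Prod>x\<in>{a} \<times> B. if x \<in> {a} \<times> T then 1 - r else 1)"
    using assms(3,4) by (intro prod.cong refl) (auto simp: measure_pmf_single)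
  also have "\<dots> = (1 - r) ^ card ({a} \<times> B \<inter> {a} \<times> T)"
    using fin by (simp add: prod.If_cases)
  also have "{a} \<times> B \<inter> {a} \<times> T = {a} \<times> T" using assms(2) by auto
  also have "card ({a} \<times> T) = card T" by (simp add: card_cartesian_product_singleton)
  finally have F: "measure_pmf.prob ?P (?h -` {False}) = (1 - r) ^ card T" .
  have T: "measure_pmf.prob ?P (?h -` {True}) = 1 - (1 - r) ^ card T"
  proof -
    have "?h -` {True} = UNIV - ?h -` {False}" by auto
    then show ?thesis using F measure_pmf.prob_compl[of "?h -` {False}" ?P] by simp
  qed
  have p01: "0 \<le> (1 - r) ^ card T" "(1 - r) ^ card T \<le> 1"
    using assms(3,4) by (auto intro: power_le_one)
  show ?thesis
  proof (rule pmf_eqI)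
    fix x :: bool
    show "pmf (map_pmf ?h ?P) x = pmf (bernoulli_pmf (1 - (1 - r) ^ card T)) x"
      using F T p01 by (cases x) (simp_all add: pmf_map)
  qed
qed

lemma greedy_dist:
  assumes "finite B" "k \<le> card B" "distinct as" "0 \<le> r" "r \<le> 1"
  shows "map_pmf (\<lambda>f. fst (greedy B k U as f)) (Pi_pmf (set as \<times> B) False (\<lambda>_. bernoulli_pmf r))
         = binomial_pmf (length as) (1 - (1 - r) ^ k)"
  using assms(3)
proof (induction as arbitrary: U)
  have p01: "0 \<le> (1 - r) ^ k" "(1 - r) ^ k \<le> 1"
    using assms(4,5) by (auto intro: power_le_one)
  case Nil
  then show ?case using p01 by (simp add: binomial_pmf_0)
next
  have p01: "0 \<le> (1 - r) ^ k" "(1 - r) ^ k \<le> 1"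
    using assms(4,5) by (auto intro: power_le_one)
  case (Cons a as)
  let ?p = "1 - (1 - r) ^ k"
  let ?T = "Tset B k U"
  let ?P = "Pi_pmf ({a} \<times> B) False (\<lambda>_. bernoulli_pmf r)"
  let ?Q = "Pi_pmf (set as \<times> B) False (\<lambda>_. bernoulli_pmf r)"
  let ?mg = "\<lambda>(g, h) x. if x \<in> {a} \<times> B then g x else h x"
  let ?hit = "\<lambda>g. \<exists>b\<in>?T. g (a, b)"
  have aas: "a \<notin> set as" "distinct as" using Cons.prems by auto
  have Tsub: "?T \<subseteq> B" using Tset_sub[OF assms(1)] .
  have un: "set (a # as) \<times> B = {a} \<times> B \<union> set as \<times> B" by auto
  have PQ: "Pi_pmf (set (a # as) \<times> B) False (\<lambda>_. bernoulli_pmf r) = map_pmf ?mg (pair_pmf ?P ?Q)"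
    unfolding un using assms(1) aas by (intro Pi_pmf_union) auto
  have key: "fst (greedy B k U (a # as) (?mg (g, h))) =
     (if ?hit g then Suc (fst (greedy B k (insert (Min {b \<in> ?T. g (a, b)}) U) as h))
      else fst (greedy B k U as h))" for g h
  proof -
    have H: "{b \<in> ?T. ?mg (g, h) (a, b)} = {b \<in> ?T. g (a, b)}" using Tsub by auto
    have C: "greedy B k V as (?mg (g, h)) = greedy B k V as h" for V
      using aas assms(1) by (intro greedy_cong) auto
    show ?thesis unfolding greedy.simps H C Let_def by simp
  qed
  have "map_pmf (\<lambda>f. fst (greedy B k U (a # as) f)) (Pi_pmf (set (a # as) \<times> B) False (\<lambda>_. bernoulli_pmf r))
     = bind_pmf ?P (\<lambda>g. map_pmf (\<lambda>h. fst (greedy B k U (a # as) (?mg (g, h)))) ?Q)"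
    unfolding PQ pair_pmf_def by (simp add: map_bind_pmf map_pmf_def bind_assoc_pmf bind_return_pmf)
  also have "\<dots> = bind_pmf ?P (\<lambda>g. if ?hit g then map_pmf Suc (binomial_pmf (length as) ?p)
                                     else binomial_pmf (length as) ?p)"
  proof (intro bind_pmf_cong refl)
    fix g
    show "map_pmf (\<lambda>h. fst (greedy B k U (a # as) (?mg (g, h)))) ?Q =
          (if ?hit g then map_pmf Suc (binomial_pmf (length as) ?p) else binomial_pmf (length as) ?p)"
    proof (cases "?hit g")
      case True
      have "map_pmf (\<lambda>h. fst (greedy B k U (a # as) (?mg (g, h)))) ?Q
          = map_pmf Suc (map_pmf (\<lambda>h. fst (greedy B k (insert (Min {b \<in> ?T. g (a, b)}) U) as h)) ?Q)"
        unfolding key using True by (simp add: pmf.map_comp o_def)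
      then show ?thesis using True Cons.IH[OF aas(2)] by simp
    next
      case False
      then show ?thesis unfolding key using Cons.IH[OF aas(2)] by simp
    qed
  qed
  also have "\<dots> = bind_pmf (map_pmf ?hit ?P) (\<lambda>b. if b then map_pmf Suc (binomial_pmf (length as) ?p)
                                     else binomial_pmf (length as) ?p)"
    by (simp add: bind_map_pmf)
  also have "map_pmf ?hit ?P = bernoulli_pmf ?p"
    using row_hit[OF assms(1) Tsub assms(4,5), of a] Tset_card[OF assms(1,2)] by simp
  also have "bind_pmf (bernoulli_pmf ?p) (\<lambda>b. if b then map_pmf Suc (binomial_pmf (length as) ?p)
                                     else binomial_pmf (length as) ?p) = binomial_pmf (length (a # as)) ?p"
  proof -
    have pin: "?p \<in> {0..1}" using p01 by simp
    show ?thesis unfolding length_Cons binomial_pmf_Suc[OF pin]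
    proof (intro bind_pmf_cong refl)
      fix b :: bool
      show "(if b then map_pmf Suc (binomial_pmf (length as) ?p) else binomial_pmf (length as) ?p) =
        binomial_pmf (length as) ?p \<bind> (\<lambda>k. return_pmf ((if b then 1 else 0) + k))"
        by (cases b) (simp_all add: bind_return_pmf' map_pmf_def[symmetric])
    qed
  qed
  finally show ?case .
qed



lemma ksubsets_fin: "finite (ksubsets n s)"
  unfolding ksubsets_def by (rule finite_subset[of _ "Pow {..<n}"]) auto

lemma ksubsets_ne: "s \<le> n \<Longrightarrow> ksubsets n s \<noteq> {}"
proof -
  assume "s \<le> n"
  then have "{..<s} \<in> ksubsets n s" unfolding ksubsets_def by auto
  then show ?thesis by blast
qed

lemma ksubsets_mem: "A \<in> ksubsets n s \<Longrightarrow> finite A \<and> card A = s"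
  unfolding ksubsets_def by (auto intro: finite_subset)

lemma max_matching_ge:
  assumes "finite E" "is_matching E M"
  shows "card M \<le> max_matching E"
proof -
  have "{M. is_matching E M} \<subseteq> Pow E" unfolding is_matching_def by auto
  then have "finite {M. is_matching E M}" using assms(1) by (meson finite_Pow_iff finite_subset)
  then show ?thesis unfolding max_matching_def using assms(2) by (intro Max_ge) auto
qed

lemma coupling:
  assumes "s \<le> n" "0 \<le> r" "r \<le> 1" "m \<le> s"
  shows "dominated_with (binomial_pmf s (1 - (1 - r) ^ (s - m))) (N2_dist n s r)
           (1 - measure_pmf.prob (binomial_pmf s (1 - (1 - r) ^ (s - m))) {x. x \<le> m})"
proof -
  define p where "p = 1 - (1 - r) ^ (s - m)"
  define KS where "KS = pmf_of_set (ksubsets n s)"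
  define PP where "PP = (\<lambda>(A::nat set) (B::nat set). Pi_pmf (A \<times> B) False (\<lambda>_. bernoulli_pmf r))"
  define G where "G = (\<lambda>(A::nat set) (B::nat set) f. (fst (greedy B (s - m) {} (sorted_list_of_set A) f), max_matching {e. f e}))"
  define \<mu> where "\<mu> = bind_pmf KS (\<lambda>A. bind_pmf KS (\<lambda>B. map_pmf (G A B) (PP A B)))"
  have setKS: "set_pmf KS = ksubsets n s"
    unfolding KS_def using ksubsets_fin ksubsets_ne[OF assms(1)] by simp
  have m1: "map_pmf fst \<mu> = binomial_pmf s p"
  proof -
    have "map_pmf fst \<mu> = bind_pmf KS (\<lambda>A. bind_pmf KS (\<lambda>B. binomial_pmf s p))"
      unfolding \<mu>_def map_bind_pmf
    proof (intro bind_pmf_cong refl)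
      fix A B assume A: "A \<in> set_pmf KS" and B: "B \<in> set_pmf KS"
      have fA: "finite A" "card A = s" and fB: "finite B" "card B = s"
        using A B setKS ksubsets_mem by auto
      have "map_pmf fst (map_pmf (G A B) (PP A B)) =
            map_pmf (\<lambda>f. fst (greedy B (s - m) {} (sorted_list_of_set A) f))
              (Pi_pmf (set (sorted_list_of_set A) \<times> B) False (\<lambda>_. bernoulli_pmf r))"
        using fA by (simp add: pmf.map_comp o_def G_def PP_def)
      also have "\<dots> = binomial_pmf (length (sorted_list_of_set A)) p"
        unfolding p_def using fB assms by (intro greedy_dist) auto
      finally show "map_pmf fst (map_pmf (G A B) (PP A B)) = binomial_pmf s p"
        using fA by simp
    qed
    then show ?thesis by (simp add: bind_pmf_const)
  qed
  have m2: "map_pmf snd \<mu> = N2_dist n s r"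
    unfolding \<mu>_def N2_dist_def H_s_def KS_def[symmetric] PP_def G_def
    by (simp add: map_bind_pmf pmf.map_comp o_def map_pmf_def bind_assoc_pmf bind_return_pmf)
  have "measure_pmf.prob \<mu> {(x, y). x \<le> m} \<le> measure_pmf.prob \<mu> {(x, y). x \<le> y}"
  proof (rule measure_pmf.finite_measure_mono_AE)
    show "AE z in measure_pmf \<mu>. z \<in> {(x, y). x \<le> m} \<longrightarrow> z \<in> {(x, y). x \<le> y}"
    proof (rule AE_pmfI)
      fix z assume z: "z \<in> set_pmf \<mu>"
      then obtain A B f where A: "A \<in> ksubsets n s" and B: "B \<in> ksubsets n s"
        and f: "f \<in> set_pmf (PP A B)" and zeq: "z = G A B f"
        unfolding \<mu>_def using setKS by auto
      have fA: "finite A" "card A = s" and fB: "finite B" "card B = s"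
        using A B ksubsets_mem by auto
      have fsub: "{e. f e} \<subseteq> A \<times> B"
        using f set_Pi_pmf_subset[of "A \<times> B" False "\<lambda>_. bernoulli_pmf r"] fA fB
        unfolding PP_def by auto
      have finE: "finite {e. f e}" using fsub fA fB finite_subset by blast
      show "z \<in> {(x, y). x \<le> m} \<longrightarrow> z \<in> {(x, y). x \<le> y}"
      proof
        assume "z \<in> {(x, y). x \<le> m}"
        then have le: "card {} + fst (greedy B (s - m) {} (sorted_list_of_set A) f) \<le> m"
          unfolding zeq G_def by simp
        have "(s - m) + m \<le> card B" using fB assms(4) by simp
        note gm = greedy_matching[OF fB(1) _ _ le this]
        then have "is_matching {e. f e} (snd (greedy B (s - m) {} (sorted_list_of_set A) f))"
          unfolding is_matching_def by auto
        from max_matching_ge[OF finE this] gm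
        show "z \<in> {(x, y). x \<le> y}" unfolding zeq G_def by auto
      qed
    qed
  qed simp
  also have "measure_pmf.prob \<mu> {(x, y). x \<le> m} = measure_pmf.prob (map_pmf fst \<mu>) {x. x \<le> m}"
    by (simp add: case_prod_unfold vimage_def)
  finally have "measure_pmf.prob (binomial_pmf s p) {x. x \<le> m} \<le> measure_pmf.prob \<mu> {(x, y). x \<le> y}"
    using m1 by simp
  then show ?thesis unfolding dominated_with_def p_def[symmetric] using m1 m2 by auto
qed



lemma pow_upper:
  fixes r :: real assumes "0 \<le> r" "r \<le> 1"
  shows "1 - (1 - r) ^ k \<le> real k * r"
  using Bernoulli_inequality[of "-r" k] assms by simp

lemma pow_lower:
  fixes r :: real assumes "0 \<le> r" "r \<le> 1"
  shows "(1 - r) ^ k \<le> 1 - real k * r + (real k * r)^2"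
proof (induction k)
  case 0 then show ?case by simp
next
  case (Suc k)
  have "(1 - r) ^ Suc k = (1 - r) ^ k * (1 - r)" by simp
  also have "\<dots> \<le> (1 - real k * r + (real k * r)^2) * (1 - r)"
    using Suc assms by (intro mult_right_mono) auto
  also have "\<dots> \<le> 1 - real (Suc k) * r + (real (Suc k) * r)^2"
  proof -
    have "(1 - real k * r + (real k * r)^2) * (1 - r) =
          1 - real (Suc k) * r + real k * r^2 + (real k)^2 * r^2 - (real k)^2 * r^3"
      by (simp add: algebra_simps power2_eq_square power3_eq_cube)
    also have "\<dots> \<le> 1 - real (Suc k) * r + (real (Suc k) * r)^2"
    proof -
      have kk: "real k + (real k)^2 \<le> (real (Suc k))^2"
        by (simp add: power2_eq_square algebra_simps)
      have "(real k + (real k)^2) * r^2 \<le> (real (Suc k))^2 * r^2"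
        using kk by (intro mult_right_mono) auto
      then have "real k * r^2 + (real k)^2 * r^2 \<le> (real (Suc k))^2 * r^2"
        by (simp add: algebra_simps)
      moreover have "0 \<le> (real k)^2 * r^3" using assms by simp
      ultimately show ?thesis by (simp add: power_mult_distrib)
    qed
    finally show ?thesis .
  qed
  finally show ?case .
qed

lemma dom_mono: "dominated_with X Y e \<Longrightarrow> e \<le> e' \<Longrightarrow> dominated_with X Y e'"
  unfolding dominated_with_def by force

lemma good_n:
  fixes r :: real and s n m :: nat
  assumes "1 \<le> s" "s \<le> n" "2 \<le> n" "0 \<le> r" "r \<le> 1"
    and m: "m = nat \<lceil>real s ^ 2 * r + sqrt (real s * ln (real n))\<rceil>" and "m \<le> s"
  shows "dominated_with (binomial_pmf s (1 - (1 - r) ^ (s - m))) (N2_dist n s r) (1 / real n ^ 2)"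
proof -
  define p where "p = 1 - (1 - r) ^ (s - m)"
  define \<epsilon> where "\<epsilon> = sqrt (real s * ln (real n))"
  have lnpos: "0 < ln (real n)" using assms(3) by simp
  have eps0: "0 \<le> \<epsilon>" unfolding \<epsilon>_def using lnpos by simp
  have p01: "0 \<le> (1 - r) ^ (s - m)" "(1 - r) ^ (s - m) \<le> 1"
    using assms(4,5) by (auto intro: power_le_one)
  have pin: "p \<in> {0..1}" unfolding p_def using p01 by simp
  have "p \<le> real (s - m) * r" unfolding p_def using pow_upper assms(4,5) by blast
  also have "\<dots> \<le> real s * r" using assms(4) by (intro mult_right_mono) auto
  finally have ple: "p \<le> real s * r" .
  have sub: "{x. m < x} \<subseteq> {x. real x \<ge> real s * p + \<epsilon>}"
  proof
    fix x assume "x \<in> {x. m < x}"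
    then have "real m < real x" by simp
    moreover have "real s ^ 2 * r + \<epsilon> \<le> real m"
      unfolding m \<epsilon>_def by linarith
    moreover have "real s * p \<le> real s ^ 2 * r"
      using ple mult_left_mono[OF ple, of "real s"] by (simp add: power2_eq_square)
    ultimately show "x \<in> {x. real x \<ge> real s * p + \<epsilon>}" by simp
  qed
  have bd: "binomial_distribution p" using pin by unfold_locales
  have "measure_pmf.prob (binomial_pmf s p) {x. m < x}
        \<le> measure_pmf.prob (binomial_pmf s p) {x. real x \<ge> real s * p + \<epsilon>}"
    using sub by (intro measure_pmf.finite_measure_mono) auto
  also have "\<dots> \<le> exp (-2 * \<epsilon>\<^sup>2 / real s)"
    using binomial_distribution.prob_ge[OF bd _ eps0, of s] assms(1) by simp
  also have "-2 * \<epsilon>\<^sup>2 / real s = -2 * ln (real n)"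
    unfolding \<epsilon>_def using lnpos assms(1) by simp
  also have "exp (-2 * ln (real n)) = 1 / real n ^ 2"
  proof -
    have "exp (-2 * ln (real n)) = inverse (exp (ln (real n ^ 2)))"
      by (simp add: ln_realpow exp_minus)
    then show ?thesis using assms(3) by (simp add: field_simps)
  qed
  finally have tail: "measure_pmf.prob (binomial_pmf s p) {x. m < x} \<le> 1 / real n ^ 2" .
  have "1 - measure_pmf.prob (binomial_pmf s p) {x. x \<le> m} = measure_pmf.prob (binomial_pmf s p) {x. m < x}"
  proof -
    have "{x. m < x} = UNIV - {x. x \<le> m}" by auto
    then show ?thesis using measure_pmf.prob_compl[of "{x. x \<le> m}" "binomial_pmf s p"] by simp
  qed
  then have "1 - measure_pmf.prob (binomial_pmf s p) {x. x \<le> m} \<le> 1 / real n ^ 2" using tail by simp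
  moreover have "dominated_with (binomial_pmf s p) (N2_dist n s r) (1 - measure_pmf.prob (binomial_pmf s p) {x. x \<le> m})"
    unfolding p_def using coupling assms by simp
  ultimately show ?thesis unfolding p_def[symmetric] by (rule dom_mono[rotated])
qed



lemma eps_small: "(\<lambda>n::nat. 1 / real n ^ 2) \<in> o(\<lambda>n. 1 / real n)"
  by real_asymp

theorem mainTheorem16:
  fixes q C' r :: "nat \<Rightarrow> real" and s :: "nat \<Rightarrow> nat"
  assumes s_def: "\<forall>\<^sub>F n in sequentially. real (s n) = C' n * real n * q n"
    and s_pos: "\<forall>\<^sub>F n in sequentially. 1 \<le> s n \<and> s n \<le> n"
    and C'_ge: "\<forall>\<^sub>F n in sequentially. C' n \<ge> 1"
    and r_prob: "\<forall>\<^sub>F n in sequentially. 0 \<le> r n \<and> r n \<le> 1"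
    and ln_small: "(\<lambda>n. ln (real n)) \<in> o(\<lambda>n. real n * q n)"
    and r_small: "r \<in> o(\<lambda>n. 1 / (C' n * real n * q n))"
  shows "\<exists>s2 :: nat \<Rightarrow> real. \<exists>eps :: nat \<Rightarrow> real.
           s2 \<sim>[sequentially] (\<lambda>n. C' n * real n * q n * r n) \<and>
           eps \<in> o(\<lambda>n. 1 / real n) \<and>
           (\<forall>\<^sub>F n in sequentially. 0 \<le> s2 n \<and> s2 n \<le> 1 \<and>
              dominated_with (binomial_pmf (s n) (s2 n)) (N2_dist n (s n) (r n)) (eps n))"
proof -
  define m where "m n = nat \<lceil>real (s n) ^ 2 * r n + sqrt (real (s n) * ln (real n))\<rceil>" for n
  define s2 where "s2 n = 1 - (1 - r n) ^ (s n - m n)" for n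
  define eps where "eps n = 1 / real n ^ 2" for n :: nat
  define g where "g n = C' n * real n * q n * r n" for n
  have ev: "\<forall>\<^sub>F n in sequentially. real (s n) = C' n * real n * q n \<and> 1 \<le> s n \<and> s n \<le> n
      \<and> C' n \<ge> 1 \<and> 0 \<le> r n \<and> r n \<le> 1 \<and> n \<ge> 2"
    using s_def s_pos C'_ge r_prob eventually_ge_at_top[of 2]
    by eventually_elim auto
  have L1: "(\<lambda>n. real (s n) * r n) \<longlonglongrightarrow> 0"
  proof -
    have "(\<lambda>n. r n / (1 / (C' n * real n * q n))) \<longlonglongrightarrow> 0"
      using smalloD_tendsto[OF r_small] .
    moreover have "\<forall>\<^sub>F n in sequentially. r n / (1 / (C' n * real n * q n)) = real (s n) * r n"
      using ev by eventually_elim auto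
    ultimately show ?thesis by (rule Lim_transform_eventually)
  qed
  have L2: "(\<lambda>n. ln (real n) / real (s n)) \<longlonglongrightarrow> 0"
  proof (rule tendsto_sandwich[of "\<lambda>_. 0" _ _ "\<lambda>n. ln (real n) / (real n * q n)"])
    show "\<forall>\<^sub>F n in sequentially. 0 \<le> ln (real n) / real (s n)"
      using ev by eventually_elim auto
    show "\<forall>\<^sub>F n in sequentially. ln (real n) / real (s n) \<le> ln (real n) / (real n * q n)"
      using ev
    proof eventually_elim
      case (elim n)
      have s0: "real (s n) > 0" using elim by simp
      have nq: "real n * q n > 0"
      proof (rule ccontr)
        assume "\<not> real n * q n > 0"
        then have "C' n * (real n * q n) \<le> 0" using elim by (simp add: mult_nonneg_nonpos)
        then show False using elim s0 by (simp add: mult.assoc)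
      qed
      have "1 * (real n * q n) \<le> C' n * (real n * q n)" using elim nq
        by (intro mult_right_mono) auto
      then have "real n * q n \<le> real (s n)" using elim by (simp add: mult.assoc)
      then show ?case using nq elim by (intro divide_left_mono) auto
    qed
  qed (auto intro: smalloD_tendsto[OF ln_small])
  have L3: "(\<lambda>n. 1 / real (s n)) \<longlonglongrightarrow> 0"
  proof (rule tendsto_sandwich[of "\<lambda>_. 0" _ _ "\<lambda>n. (ln (real n) / real (s n)) / ln 2"])
    show "\<forall>\<^sub>F n in sequentially. 0 \<le> 1 / real (s n)" by simp
    show "\<forall>\<^sub>F n in sequentially. 1 / real (s n) \<le> (ln (real n) / real (s n)) / ln 2"
      using ev
    proof eventually_elim
      case (elim n)
      have "ln 2 \<le> ln (real n)" using elim by simp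
      then have "ln 2 / real (s n) \<le> ln (real n) / real (s n)" using elim by (intro divide_right_mono) auto
      then have "(ln 2 / real (s n)) / ln 2 \<le> (ln (real n) / real (s n)) / ln 2"
        by (rule divide_right_mono) simp
      then show ?case by simp
    qed
    show "(\<lambda>n. (ln (real n) / real (s n)) / ln 2) \<longlonglongrightarrow> 0"
      using tendsto_divide_zero[OF L2, of "ln 2"] by simp
  qed auto
  have L4: "(\<lambda>n. real (m n) / real (s n)) \<longlonglongrightarrow> 0"
  proof (rule tendsto_sandwich[of "\<lambda>_. 0" _ _ "\<lambda>n. real (s n) * r n + sqrt (ln (real n) / real (s n)) + 1 / real (s n)"])
    show "\<forall>\<^sub>F n in sequentially. 0 \<le> real (m n) / real (s n)" by simp
    show "\<forall>\<^sub>F n in sequentially. real (m n) / real (s n) \<le>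
            real (s n) * r n + sqrt (ln (real n) / real (s n)) + 1 / real (s n)"
      using ev
    proof eventually_elim
      case (elim n)
      define x where "x = real (s n) ^ 2 * r n + sqrt (real (s n) * ln (real n))"
      have s0: "real (s n) > 0" using elim by simp
      have x0: "0 \<le> x" unfolding x_def using elim by simp
      have "real (m n) \<le> x + 1" unfolding m_def x_def[symmetric] using x0 by linarith
      then have "real (m n) / real (s n) \<le> (x + 1) / real (s n)" using s0 by (intro divide_right_mono) auto
      also have "(x + 1) / real (s n) = real (s n) * r n + sqrt (real (s n) * ln (real n)) / real (s n) + 1 / real (s n)"
        unfolding x_def using s0 by (simp add: field_simps power2_eq_square)
      also have "sqrt (real (s n) * ln (real n)) / real (s n) = sqrt (ln (real n) / real (s n))"
      proof -
        have "sqrt (real (s n) * ln (real n)) / real (s n) = sqrt (real (s n) * ln (real n)) / sqrt (real (s n) ^ 2)"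
          using s0 by simp
        also have "\<dots> = sqrt (real (s n) * ln (real n) / real (s n) ^ 2)" by (simp add: real_sqrt_divide)
        also have "real (s n) * ln (real n) / real (s n) ^ 2 = ln (real n) / real (s n)"
          using s0 by (simp add: power2_eq_square)
        finally show ?thesis .
      qed
      finally show ?case .
    qed
    have "(\<lambda>n. real (s n) * r n + sqrt (ln (real n) / real (s n)) + 1 / real (s n)) \<longlonglongrightarrow> 0 + sqrt 0 + 0"
      by (intro tendsto_add L1 L3 tendsto_real_sqrt L2)
    then show "(\<lambda>n. real (s n) * r n + sqrt (ln (real n) / real (s n)) + 1 / real (s n)) \<longlonglongrightarrow> 0"
      by simp
  qed auto
  have ev2: "\<forall>\<^sub>F n in sequentially. real (m n) / real (s n) < 1"
    using order_tendstoD(2)[OF L4, of 1] by simp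
  have ev3: "\<forall>\<^sub>F n in sequentially. real (s n) = C' n * real n * q n \<and> 1 \<le> s n \<and> s n \<le> n
      \<and> C' n \<ge> 1 \<and> 0 \<le> r n \<and> r n \<le> 1 \<and> n \<ge> 2 \<and> m n \<le> s n"
    using ev ev2
  proof eventually_elim
    case (elim n)
    then have "real (m n) < real (s n)" by (simp add: divide_less_eq)
    then show ?case using elim by simp
  qed
  have part3: "\<forall>\<^sub>F n in sequentially. 0 \<le> s2 n \<and> s2 n \<le> 1 \<and>
              dominated_with (binomial_pmf (s n) (s2 n)) (N2_dist n (s n) (r n)) (eps n)"
    using ev3
  proof eventually_elim
    case (elim n)
    have p01: "0 \<le> (1 - r n) ^ (s n - m n)" "(1 - r n) ^ (s n - m n) \<le> 1"
      using elim by (auto intro: power_le_one)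
    have "dominated_with (binomial_pmf (s n) (s2 n)) (N2_dist n (s n) (r n)) (eps n)"
      unfolding s2_def eps_def using elim by (intro good_n) (auto simp: m_def)
    then show ?case using p01 unfolding s2_def by simp
  qed
  have part1: "s2 \<sim>[sequentially] g"
  proof (rule asymp_equivI)
    define lo where "lo n = (1 - real (m n) / real (s n)) * (1 - real (s n) * r n)" for n
    show "(\<lambda>n. if s2 n = 0 \<and> g n = 0 then 1 else s2 n / g n) \<longlonglongrightarrow> 1"
    proof (rule tendsto_sandwich[of lo _ _ "\<lambda>_. 1"])
      have "lo \<longlonglongrightarrow> (1 - 0) * (1 - 0)"
        unfolding lo_def by (intro tendsto_mult tendsto_diff tendsto_const L4 L1)
      then show "lo \<longlonglongrightarrow> 1" by simp
      have both: "\<forall>\<^sub>F n in sequentially. lo n \<le> (if s2 n = 0 \<and> g n = 0 then 1 else s2 n / g n) \<and>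
              (if s2 n = 0 \<and> g n = 0 then 1 else s2 n / g n) \<le> 1"
        using ev3
      proof eventually_elim
        case (elim n)
        have s0: "real (s n) > 0" using elim by simp
        have gs: "g n = real (s n) * r n" unfolding g_def using elim by simp
        have mle: "0 \<le> real (m n) / real (s n)" by simp
        have K: "real (s n - m n) = real (s n) - real (m n)" using elim by simp
        show ?case
        proof (cases "r n = 0")
          case True
          then have "s2 n = 0" "g n = 0" unfolding s2_def gs by simp_all
          moreover have "lo n \<le> 1" unfolding lo_def using True mle by simp
          ultimately show ?thesis by simp
        next
          case False
          then have r0: "r n > 0" using elim by simp
          have g0: "g n > 0" unfolding gs using s0 r0 by simp
          define k where "k = real (s n - m n)"
          have k0: "0 \<le> k" "k \<le> real (s n)" unfolding k_def using elim by auto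
          have up: "s2 n \<le> k * r n" unfolding s2_def k_def using pow_upper elim by blast
          have low: "k * r n - (k * r n)^2 \<le> s2 n"
            unfolding s2_def k_def using pow_lower[of "r n" "s n - m n"] elim by simp
          have kr: "k * r n \<le> real (s n) * r n" using k0 r0 by (intro mult_right_mono) auto
          have kr0: "0 \<le> k * r n" using k0 r0 by simp
          have "k * r n * (1 - real (s n) * r n) \<le> k * r n * (1 - k * r n)"
            using kr kr0 by (intro mult_left_mono) auto
          also have "\<dots> = k * r n - (k * r n)^2" by (simp add: power2_eq_square algebra_simps)
          finally have A: "k * r n * (1 - real (s n) * r n) \<le> s2 n" using low by linarith
          have loeq: "lo n * g n = k * r n * (1 - real (s n) * r n)"
            unfolding lo_def gs k_def K using s0 by (simp add: field_simps)
          have "lo n \<le> s2 n / g n" using A loeq g0 by (simp add: le_divide_eq)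
          moreover have "s2 n / g n \<le> 1" using up kr g0 gs by (simp add: divide_le_eq)
          ultimately show ?thesis using g0 by simp
        qed
      qed
      show "\<forall>\<^sub>F n in sequentially. lo n \<le> (if s2 n = 0 \<and> g n = 0 then 1 else s2 n / g n)"
        using both by (rule eventually_mono) simp
      show "\<forall>\<^sub>F n in sequentially. (if s2 n = 0 \<and> g n = 0 then 1 else s2 n / g n) \<le> 1"
        using both by (rule eventually_mono) simp
    qed (auto intro: tendsto_const)
  qed
  show ?thesis
    using part1 part3 eps_small unfolding g_def eps_def by blast
qed


end
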